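(* Let $V$ be a real vector space, let $F$ be a geometric mean closed vector lattice, let $T\colon V\times V\to F$ be a vector semi-inner product, and let $u\in F^+$. Define $\|x\|^T_u:=T(x,x)\boxtimes u$ for $x\in V$. Then for all $x,y\in V$, \[ \|x+y\|^T_u\boxplus\|x-y\|^T_u=2^{1/2}\bigl(\|x\|^T_u\boxplus\|y\|^T_u\bigr). \]
   Context: All vector spaces are over $\mathbb{R}$ and all vector lattices are Archimedean; $F^+=\{x\in F:x\ge0\}$. A vector lattice $F$ is geometric mean closed if $\inf\{\theta u+\theta^{-1}v:\theta\in(0,\infty)\}$ exists in $F$ for all $u,v\in F^+$, and then $u\boxtimes v:=2^{-1}\inf\{\theta u+\theta^{-1}v:\theta\in(0,\infty)\}$. For $u,v\in F$, $u\boxplus v:=\sup\{(\cos\theta)u+(\sin\theta)v:\theta\in[0,2\pi]\}$; this supremum exists in every geometric mean closed vector lattice. A map $T\colon V\times V\to F$ is a vector semi-inner product if it is bilinear, symmetric ($T(x,y)=T(y,x)$), and satisfies $T(x,x)\ge 0$ for all $x\in V$. *)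

theory Defs
  imports "HOL-Analysis.Analysis"
begin

class vector_lattice = ordered_real_vector + lattice

class archimedean_vector_lattice = vector_lattice +
  assumes archimedean: "0 \<le> x \<Longrightarrow> (\<And>n::nat. real n *\<^sub>R x \<le> y) \<Longrightarrow> x = 0"

definition is_infimum :: "'a::order set \<Rightarrow> 'a \<Rightarrow> bool" where
  "is_infimum S a \<longleftrightarrow> (\<forall>s\<in>S. a \<le> s) \<and> (\<forall>b. (\<forall>s\<in>S. b \<le> s) \<longrightarrow> b \<le> a)"

definition is_supremum :: "'a::order set \<Rightarrow> 'a \<Rightarrow> bool" where
  "is_supremum S a \<longleftrightarrow> (\<forall>s\<in>S. s \<le> a) \<and> (\<forall>b. (\<forall>s\<in>S. s \<le> b) \<longrightarrow> a \<le> b)"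

definition gm_set :: "'f::vector_lattice \<Rightarrow> 'f \<Rightarrow> 'f set" where
  "gm_set u v = {\<theta> *\<^sub>R u + inverse \<theta> *\<^sub>R v | \<theta>. 0 < \<theta>}"

definition geometric_mean_closed :: "'f::vector_lattice itself \<Rightarrow> bool" where
  "geometric_mean_closed _ \<longleftrightarrow>
     (\<forall>u v :: 'f. 0 \<le> u \<longrightarrow> 0 \<le> v \<longrightarrow> (\<exists>a. is_infimum (gm_set u v) a))"

definition gmean :: "'f::vector_lattice \<Rightarrow> 'f \<Rightarrow> 'f" (infixl "\<boxtimes>" 70) where
  "u \<boxtimes> v = inverse 2 *\<^sub>R (THE a. is_infimum (gm_set u v) a)"

definition rsq :: "'f::vector_lattice \<Rightarrow> 'f \<Rightarrow> 'f" (infixl "\<boxplus>" 65) where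
  "u \<boxplus> v = (THE a. is_supremum {cos \<theta> *\<^sub>R u + sin \<theta> *\<^sub>R v | \<theta>. 0 \<le> \<theta> \<and> \<theta> \<le> 2 * pi} a)"

definition vector_semi_inner_product :: "('v::real_vector \<Rightarrow> 'v \<Rightarrow> 'f::vector_lattice) \<Rightarrow> bool" where
  "vector_semi_inner_product T \<longleftrightarrow>
     (\<forall>y. linear (\<lambda>x. T x y)) \<and> (\<forall>x. linear (\<lambda>y. T x y)) \<and>
     (\<forall>x y. T x y = T y x) \<and> (\<forall>x. 0 \<le> T x x)"

definition vnorm :: "('v::real_vector \<Rightarrow> 'v \<Rightarrow> 'f::vector_lattice) \<Rightarrow> 'f \<Rightarrow> 'v \<Rightarrow> 'f" where
  "vnorm T u x = T x x \<boxtimes> u"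

end

theory Submission
  imports Defs "HOL-Library.Lattice_Algebras"
begin


subclass (in vector_lattice) lattice_ab_group_add ..

lemma inf_eq_add_sup:
  fixes x y :: "'a::lattice_ab_group_add"
  shows "inf x y = x + y - sup x y"
  using add_eq_inf_sup[of x y] by (metis add_diff_cancel_left')

lemma inf_sup_le_distrib:
  fixes x y z :: "'a::lattice_ab_group_add"
  shows "inf x (sup y z) \<le> sup (inf x y) (inf x z)"
proof -
  define S where "S = sup x (sup y z)"
  have "inf x (sup y z) = x + sup y z - S"
    unfolding S_def by (rule inf_eq_add_sup)
  also have "\<dots> = sup (x + y - S) (x + z - S)"
    by (simp only: add_sup_distrib_left diff_conv_add_uminus add_sup_distrib_right)
  also have "\<dots> \<le> sup (inf x y) (inf x z)"
  proof (rule sup_mono)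
    have "sup x y \<le> S" unfolding S_def by (rule sup_mono) simp_all
    then have "x + y - S \<le> x + y - sup x y" by (rule diff_left_mono)
    then show "x + y - S \<le> inf x y" by (simp only: inf_eq_add_sup[of x y])
    have "sup x z \<le> S" unfolding S_def by (rule sup_mono) simp_all
    then have "x + z - S \<le> x + z - sup x z" by (rule diff_left_mono)
    then show "x + z - S \<le> inf x z" by (simp only: inf_eq_add_sup[of x z])
  qed
  finally show ?thesis .
qed

lemma four_le:
  fixes A B C D E :: "'a::lattice_ab_group_add"
  assumes "inf A C \<le> E" "inf A D \<le> E" "inf B C \<le> E" "inf B D \<le> E"
  shows "inf (sup A B) (sup C D) \<le> E"
proof -
  have 1: "inf (sup A B) (sup C D) \<le> sup (inf (sup A B) C) (inf (sup A B) D)"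
    by (rule inf_sup_le_distrib)
  have 2: "inf (sup A B) C \<le> sup (inf C A) (inf C B)"
    using inf_sup_le_distrib[of C A B] by (simp add: inf_commute)
  have 3: "inf (sup A B) D \<le> sup (inf D A) (inf D B)"
    using inf_sup_le_distrib[of D A B] by (simp add: inf_commute)
  have E1: "sup (inf C A) (inf C B) \<le> E"
    using assms(1,3) unfolding inf.commute[of C A] inf.commute[of C B] by (rule le_supI)
  have E2: "sup (inf D A) (inf D B) \<le> E"
    using assms(2,4) unfolding inf.commute[of D A] inf.commute[of D B] by (rule le_supI)
  show ?thesis using order_trans[OF 1 sup_mono[OF 2 3]] le_supI[OF E1 E2] by (rule order_trans)
qed

lemma inf_le_half:
  fixes x y d :: "'a::lattice_ab_group_add"
  assumes "x + y \<le> d + d"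
  shows "inf x y \<le> d"
proof -
  have "inf x y + inf x y \<le> x + y" by (simp add: add_mono)
  then have "(inf x y - d) + (inf x y - d) \<le> 0" using assms
    by (simp add: algebra_simps)
  then show ?thesis by simp
qed

lemma ivt_lattice:
  fixes g :: "nat \<Rightarrow> 'a::lattice_ab_group_add"
  assumes step: "\<And>i. i < M \<Longrightarrow> g (Suc i) \<le> g i + (\<delta> + \<delta>)"
    and g0: "g 0 \<le> \<delta>" and gM: "- \<delta> \<le> g M"
    and dle: "\<And>i. i \<le> M \<Longrightarrow> d \<le> sup (g i) (- g i)"
  shows "d \<le> \<delta>"
proof -
  have "n \<le> M \<Longrightarrow> d \<le> sup \<delta> (- g n)" for n
  proof (induction n)
    case 0
    have "d \<le> sup (g 0) (- g 0)" using dle by simp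
    also have "\<dots> \<le> sup \<delta> (- g 0)" using g0 by (simp add: le_supI1)
    finally show ?case .
  next
    case (Suc n)
    have IH: "d \<le> sup \<delta> (- g n)" using Suc by simp
    have d2: "d \<le> sup (g (Suc n)) (- g (Suc n))" using dle Suc.prems by simp
    have "inf (sup \<delta> (- g n)) (sup (g (Suc n)) (- g (Suc n))) \<le> sup \<delta> (- g (Suc n))"
    proof (rule four_le)
      show "inf \<delta> (g (Suc n)) \<le> sup \<delta> (- g (Suc n))" by (simp add: le_infI1)
      show "inf \<delta> (- g (Suc n)) \<le> sup \<delta> (- g (Suc n))" by (simp add: le_infI1)
      show "inf (- g n) (- g (Suc n)) \<le> sup \<delta> (- g (Suc n))" by (simp add: le_infI2)
      have "- g n + g (Suc n) \<le> \<delta> + \<delta>" using step[of n] Suc.prems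
        by (simp add: algebra_simps)
      then show "inf (- g n) (g (Suc n)) \<le> sup \<delta> (- g (Suc n))"
        using inf_le_half le_supI1 by blast
    qed
    then show ?case using IH d2 by (meson le_inf_iff order_trans)
  qed
  then have "d \<le> sup \<delta> (- g M)" by simp
  also have "\<dots> \<le> \<delta>" using gM by (simp add: minus_le_iff)
  finally show ?thesis .
qed


lemma is_infimum_unique:
  assumes "is_infimum S a" "is_infimum S b" shows "a = b"
  using assms unfolding is_infimum_def by (meson antisym)

lemma is_supremum_unique:
  assumes "is_supremum S a" "is_supremum S b" shows "a = b"
  using assms unfolding is_supremum_def by (meson antisym)

lemma gm_inf:
  fixes x y :: "'f::vector_lattice"
  assumes gmc: "geometric_mean_closed TYPE('f)" and "0 \<le> x" "0 \<le> y"
  shows "is_infimum (gm_set x y) (2 *\<^sub>R (x \<boxtimes> y))"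
proof -
  obtain a where a: "is_infimum (gm_set x y) a"
    using gmc assms unfolding geometric_mean_closed_def by blast
  have "(THE a. is_infimum (gm_set x y) a) = a"
    using a is_infimum_unique by blast
  then show ?thesis using a by (simp add: gmean_def)
qed

lemma G1:
  fixes x y :: "'f::vector_lattice"
  assumes gmc: "geometric_mean_closed TYPE('f)" and "0 \<le> x" "0 \<le> y" "0 < \<theta>"
  shows "2 *\<^sub>R (x \<boxtimes> y) \<le> \<theta> *\<^sub>R x + inverse \<theta> *\<^sub>R y"
  using gm_inf[OF assms(1-3)] assms(4) unfolding is_infimum_def gm_set_def by blast

lemma G2:
  fixes x y z :: "'f::vector_lattice"
  assumes gmc: "geometric_mean_closed TYPE('f)" and "0 \<le> x" "0 \<le> y"
    and "\<And>\<theta>. 0 < \<theta> \<Longrightarrow> z \<le> \<theta> *\<^sub>R x + inverse \<theta> *\<^sub>R y"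
  shows "z \<le> 2 *\<^sub>R (x \<boxtimes> y)"
  using gm_inf[OF assms(1-3)] assms(4) unfolding is_infimum_def gm_set_def by blast

lemma gm_nonneg:
  fixes x y :: "'f::vector_lattice"
  assumes gmc: "geometric_mean_closed TYPE('f)" and "0 \<le> x" "0 \<le> y"
  shows "0 \<le> x \<boxtimes> y"
proof -
  have "0 \<le> 2 *\<^sub>R (x \<boxtimes> y)"
    by (rule G2[OF assms]) (use assms in \<open>auto intro!: add_nonneg_nonneg scaleR_nonneg_nonneg\<close>)
  then show ?thesis by (simp add: scaleR_nonneg_nonneg zero_le_scaleR_iff)
qed

lemma LB:
  fixes a u z :: "'f::vector_lattice"
  assumes gmc: "geometric_mean_closed TYPE('f)" and "0 \<le> a" "0 \<le> u"
    and z0: "0 \<le> z" and lpos: "0 < l" and za: "z \<le> l *\<^sub>R a" and zu: "z \<le> inverse l *\<^sub>R u"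
  shows "z \<le> a \<boxtimes> u"
proof -
  have "2 *\<^sub>R z \<le> 2 *\<^sub>R (a \<boxtimes> u)"
  proof (rule G2[OF gmc assms(2,3)])
    fix \<theta> :: real assume th: "0 < \<theta>"
    have "(\<theta> / l) *\<^sub>R z \<le> (\<theta> / l) *\<^sub>R (l *\<^sub>R a)"
      using lpos th by (intro scaleR_left_mono[OF za]) simp
    also have "\<dots> = \<theta> *\<^sub>R a" using lpos by simp
    finally have 1: "(\<theta> / l) *\<^sub>R z \<le> \<theta> *\<^sub>R a" .
    have e: "(l / \<theta>) * inverse l = inverse \<theta>" using lpos th by (simp add: field_simps)
    have "(l / \<theta>) *\<^sub>R z \<le> (l / \<theta>) *\<^sub>R (inverse l *\<^sub>R u)"
      using lpos th by (intro scaleR_left_mono[OF zu]) simp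
    also have "\<dots> = inverse \<theta> *\<^sub>R u" by (simp only: scaleR_scaleR e)
    finally have 2: "(l / \<theta>) *\<^sub>R z \<le> inverse \<theta> *\<^sub>R u" .
    have "2 \<le> \<theta> / l + l / \<theta>"
    proof -
      have "0 \<le> (\<theta> - l)^2" by simp
      then have "2 * \<theta> * l \<le> \<theta>^2 + l^2" by (simp add: power2_eq_square algebra_simps)
      then show ?thesis using lpos th by (simp add: field_simps power2_eq_square)
    qed
    then have "2 *\<^sub>R z \<le> (\<theta> / l + l / \<theta>) *\<^sub>R z"
      by (intro scaleR_right_mono z0)
    also have "\<dots> = (\<theta> / l) *\<^sub>R z + (l / \<theta>) *\<^sub>R z" by (simp add: scaleR_add_left)
    also have "\<dots> \<le> \<theta> *\<^sub>R a + inverse \<theta> *\<^sub>R u" using 1 2 by (rule add_mono)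
    finally show "2 *\<^sub>R z \<le> \<theta> *\<^sub>R a + inverse \<theta> *\<^sub>R u" .
  qed
  then show ?thesis
    using scaleR_left_mono[of "2 *\<^sub>R z" "2 *\<^sub>R (a \<boxtimes> u)" "inverse 2"] by simp
qed

lemma Lc:
  fixes a u :: "'f::vector_lattice"
  assumes gmc: "geometric_mean_closed TYPE('f)" and "0 \<le> a" "0 \<le> u"
    and "0 \<le> c" "0 < \<theta>"
  shows "(2 * c) *\<^sub>R (a \<boxtimes> u) \<le> \<theta> *\<^sub>R a + (c^2 / \<theta>) *\<^sub>R u"
proof (cases "c = 0")
  case True then show ?thesis using assms(2,5) by (simp add: scaleR_nonneg_nonneg)
next
  case False
  then have c: "0 < c" using assms(4) by simp
  have e1: "c * (\<theta>/c) = \<theta>" and e2: "c * inverse (\<theta>/c) = c^2 / \<theta>"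
    using c by (simp_all add: field_simps power2_eq_square)
  have "c *\<^sub>R (2 *\<^sub>R (a \<boxtimes> u)) \<le> c *\<^sub>R ((\<theta>/c) *\<^sub>R a + inverse (\<theta>/c) *\<^sub>R u)"
    using G1[OF gmc assms(2,3), of "\<theta>/c"] c assms(5) by (intro scaleR_left_mono) simp_all
  also have "\<dots> = (c * (\<theta>/c)) *\<^sub>R a + (c * inverse (\<theta>/c)) *\<^sub>R u"
    by (simp only: scaleR_add_right scaleR_scaleR)
  also have "\<dots> = \<theta> *\<^sub>R a + (c^2 / \<theta>) *\<^sub>R u" by (simp only: e1 e2)
  finally have X: "c *\<^sub>R (2 *\<^sub>R (a \<boxtimes> u)) \<le> \<theta> *\<^sub>R a + (c^2 / \<theta>) *\<^sub>R u" .
  have eq: "(2 * c) *\<^sub>R (a \<boxtimes> u) = c *\<^sub>R (2 *\<^sub>R (a \<boxtimes> u))" by (simp only: scaleR_scaleR mult.commute)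
  show ?thesis unfolding eq by (rule X)
qed



lemma real_step_bound:
  fixes N t t' :: real
  assumes N: "1 \<le> N" and t: "1/N \<le> t" and t': "t' = t + 1/N^3"
  shows "0 \<le> (inverse t - inverse t') / 2" "(inverse t - inverse t') / 2 \<le> 1/N"
proof -
  have Np: "0 < N" using N by simp
  have Nt: "1 \<le> N * t" using t Np by (simp add: divide_le_eq mult.commute)
  have "0 < 1/N" using Np by simp
  then have tp: "0 < t" using t by linarith
  have h3: "0 < 1/N^3" using Np by simp
  have t'p: "t \<le> t'" using t' h3 by simp
  have t'pos: "0 < t'" using tp t'p by simp
  have Nt': "1 \<le> N * t'" using Nt t'p Np by (smt (verit) mult_left_mono)
  have P: "1 \<le> (N * t) * (N * t')" using mult_mono[OF Nt Nt'] Nt by simp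
  have d: "inverse t - inverse t' = (1/N) * inverse ((N * t) * (N * t'))"
  proof -
    have "inverse t - inverse t' = (t' - t) / (t * t')" using tp t'pos by (simp add: field_simps)
    also have "t' - t = 1/N^3" using t' by simp
    finally show ?thesis using Np tp t'pos by (simp add: field_simps power3_eq_cube)
  qed
  have gen: "\<And>K::real. 1 \<le> K \<Longrightarrow> inverse K \<le> 1 \<and> 0 \<le> inverse K"
    by (simp add: inverse_le_1_iff)
  have i1: "inverse ((N * t) * (N * t')) \<le> 1" and i0: "0 \<le> inverse ((N * t) * (N * t'))"
    using gen[OF P] by auto
  have gen2: "(1/N) * K \<le> 1/N" "0 \<le> (1/N) * K" if "K \<le> 1" "0 \<le> K" for K :: real
  proof -
    have "0 \<le> 1/N" using Np by simp
    from mult_left_mono[OF that(1) this] show "(1/N) * K \<le> 1/N" by simp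
    from mult_nonneg_nonneg[OF \<open>0 \<le> 1/N\<close> that(2)] show "0 \<le> (1/N) * K" .
  qed
  have "inverse t - inverse t' \<le> 1/N" "0 \<le> inverse t - inverse t'"
    unfolding d using gen2[OF i1 i0] by auto
  then show "0 \<le> (inverse t - inverse t') / 2" by simp
  have gen3: "\<And>D E::real. D \<le> E \<Longrightarrow> 0 < E \<Longrightarrow> D/2 \<le> E" by linarith
  show "(inverse t - inverse t') / 2 \<le> 1/N"
    using \<open>inverse t - inverse t' \<le> 1/N\<close> \<open>0 < 1/N\<close> by (rule gen3)
qed


lemma h_step:
  fixes a u :: "'f::real_vector"
  shows "(t'/2) *\<^sub>R a - (inverse t' / 2) *\<^sub>R u
     = ((t/2) *\<^sub>R a - (inverse t / 2) *\<^sub>R u) + ((t' - t)/2) *\<^sub>R a + ((inverse t - inverse t')/2) *\<^sub>R u"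
  by (simp add: algebra_simps diff_divide_distrib scaleR_diff_left)

lemma half_id:
  fixes X Y :: "'f::real_vector"
  shows "(1/2) *\<^sub>R (X + Y) - X = - ((1/2) *\<^sub>R X - (1/2) *\<^sub>R Y)"
    and "(1/2) *\<^sub>R (X + Y) - Y = (1/2) *\<^sub>R X - (1/2) *\<^sub>R Y"
  by (simp_all add: algebra_simps scaleR_add_right) (metis scaleR_half_double scaleR_add_right)+


lemma lemS:
  fixes a u z :: "'f::archimedean_vector_lattice"
  assumes gmc: "geometric_mean_closed TYPE('f)" and a0: "0 \<le> a" and u0: "0 \<le> u"
    and zk: "\<And>k. 0 < k \<Longrightarrow> inf (k *\<^sub>R a) (inverse k *\<^sub>R u) \<le> z"
  shows "a \<boxtimes> u \<le> z"
proof -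
  define h where "h \<theta> = (\<theta>/2) *\<^sub>R a - (inverse \<theta> / 2) *\<^sub>R u" for \<theta> :: real
  have key: "a \<boxtimes> u - z \<le> sup (h \<theta>) (- h \<theta>)" if th: "0 < \<theta>" for \<theta>
  proof -
    define X where "X = \<theta> *\<^sub>R a"
    define Y where "Y = inverse \<theta> *\<^sub>R u"
    have "2 *\<^sub>R (a \<boxtimes> u) \<le> X + Y" unfolding X_def Y_def by (rule G1[OF gmc a0 u0 th])
    then have "(1/2) *\<^sub>R (2 *\<^sub>R (a \<boxtimes> u)) \<le> (1/2) *\<^sub>R (X + Y)"
      by (rule scaleR_left_mono) simp
    then have A1: "a \<boxtimes> u \<le> (1/2) *\<^sub>R (X + Y)" by simp
    have Z1: "inf X Y \<le> z" unfolding X_def Y_def by (rule zk[OF th])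
    have "a \<boxtimes> u - z \<le> (1/2) *\<^sub>R (X + Y) - inf X Y" using A1 Z1 by (rule diff_mono)
    also have "(1/2) *\<^sub>R (X + Y) - inf X Y = sup ((1/2) *\<^sub>R (X + Y) - X) ((1/2) *\<^sub>R (X + Y) - Y)"
      by (subst diff_inf_eq_sup, subst add_sup_distrib_left, simp only: diff_conv_add_uminus)
    also have "\<dots> = sup (- h \<theta>) (h \<theta>)"
    proof -
      have hX: "h \<theta> = (1/2) *\<^sub>R X - (1/2) *\<^sub>R Y" unfolding h_def X_def Y_def by simp
      show ?thesis unfolding hX half_id ..
    qed
    finally show ?thesis by (simp only: sup_commute)
  qed
  have bound: "a \<boxtimes> u - z \<le> (1 / (2 * real N)) *\<^sub>R (a + u)" if N: "1 \<le> N" for N :: nat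
  proof -
    define Nr where "Nr = real N"
    have Nr1: "1 \<le> Nr" unfolding Nr_def using N by simp
    have Nrp: "0 < Nr" using Nr1 by simp
    define ths where "ths i = 1/Nr + real i / Nr^3" for i :: nat
    define \<delta> where "\<delta> = (1 / (2*Nr)) *\<^sub>R (a + u)"
    have thlow: "1/Nr \<le> ths i" for i unfolding ths_def using Nrp by simp
    have thp: "0 < ths i" for i using thlow[of i] Nrp
      by (metis divide_pos_pos less_le_trans zero_less_one)
    have "a \<boxtimes> u - z \<le> \<delta>"
    proof (rule ivt_lattice[where g = "\<lambda>i. h (ths i)" and M = "N^4"])
      show "a \<boxtimes> u - z \<le> sup (h (ths i)) (- h (ths i))" for i using key[OF thp] .
      fix i
      have tS: "ths (Suc i) = ths i + 1/Nr^3" unfolding ths_def by (simp add: add_divide_distrib)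
      have c1: "(ths (Suc i) - ths i) / 2 \<le> 1/Nr"
      proof -
        have "1*1 \<le> Nr*Nr" using mult_mono[OF Nr1 Nr1] Nrp by simp
        then have "Nr*1 \<le> Nr*(Nr*Nr)" using Nrp by (intro mult_left_mono) simp_all
        then have "Nr \<le> Nr^3" by (simp add: power3_eq_cube mult.assoc)
        then have "1/Nr^3 \<le> 1/Nr" using Nrp by (intro divide_left_mono) simp_all
        moreover have "0 < 1/Nr" using Nrp by simp
        moreover have g3: "\<And>D E::real. D \<le> E \<Longrightarrow> 0 < E \<Longrightarrow> D/2 \<le> E" by linarith
        ultimately show ?thesis unfolding tS add_diff_cancel_left' by blast
      qed
      have c2: "(inverse (ths i) - inverse (ths (Suc i))) / 2 \<le> 1/Nr"
        using real_step_bound(2)[OF Nr1 thlow tS] .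
      have c20: "0 \<le> (inverse (ths i) - inverse (ths (Suc i))) / 2"
        using real_step_bound(1)[OF Nr1 thlow tS] .
      have "h (ths (Suc i)) = h (ths i) + ((ths (Suc i) - ths i)/2) *\<^sub>R a
              + ((inverse (ths i) - inverse (ths (Suc i)))/2) *\<^sub>R u"
        unfolding h_def by (rule h_step)
      also have "\<dots> \<le> h (ths i) + (1/Nr) *\<^sub>R a + (1/Nr) *\<^sub>R u"
        by (intro add_mono order_refl scaleR_right_mono c1 c2 a0 u0)
      also have "\<dots> = h (ths i) + (\<delta> + \<delta>)"
      proof -
        have r: "1/(2*Nr) + 1/(2*Nr) = 1/Nr" by simp
        have "\<delta> + \<delta> = (1/(2*Nr) + 1/(2*Nr)) *\<^sub>R (a + u)"
          unfolding \<delta>_def by (simp only: scaleR_left_distrib)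
        also have "\<dots> = (1/Nr) *\<^sub>R a + (1/Nr) *\<^sub>R u" unfolding r by (simp only: scaleR_add_right)
        finally show ?thesis by (simp only: add.assoc)
      qed
      finally show "h (ths (Suc i)) \<le> h (ths i) + (\<delta> + \<delta>)" .
    next
      have t0: "ths 0 = 1/Nr" unfolding ths_def by simp
      have "h (ths 0) \<le> (ths 0 / 2) *\<^sub>R a"
        unfolding h_def using u0 thp[of 0] by (simp add: scaleR_nonneg_nonneg)
      also have "\<dots> = (1/(2*Nr)) *\<^sub>R a" unfolding t0 by simp
      also have "\<dots> \<le> \<delta>" unfolding \<delta>_def using u0 Nrp
        by (intro scaleR_left_mono) simp_all
      finally show "h (ths 0) \<le> \<delta>" .
    next
      have tM: "Nr \<le> ths (N^4)" unfolding ths_def Nr_def using Nrp[unfolded Nr_def]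
        by (simp add: power4_eq_xxxx power3_eq_cube)
      have iM: "inverse (ths (N^4)) / 2 \<le> 1/(2*Nr)"
        using tM Nrp by (simp add: divide_simps)
      have "- \<delta> \<le> - ((1/(2*Nr)) *\<^sub>R u)" unfolding \<delta>_def using a0 Nrp
        by (intro le_imp_neg_le scaleR_left_mono) simp_all
      also have "\<dots> \<le> - ((inverse (ths (N^4)) / 2) *\<^sub>R u)"
        by (intro le_imp_neg_le scaleR_right_mono iM u0)
      also have "\<dots> \<le> h (ths (N^4))"
        unfolding h_def using a0 thp[of "N^4"] by (simp add: scaleR_nonneg_nonneg)
      finally show "- \<delta> \<le> h (ths (N^4))" .
    qed
    then show ?thesis unfolding \<delta>_def Nr_def .
  qed
  define x where "x = sup (a \<boxtimes> u - z) 0"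
  have x0: "x = 0"
  proof (rule archimedean)
    show "0 \<le> x" unfolding x_def by simp
    fix n :: nat
    show "real n *\<^sub>R x \<le> (1/2) *\<^sub>R (a + u)"
    proof (cases "n = 0")
      case True then show ?thesis using a0 u0 by (simp add: scaleR_nonneg_nonneg)
    next
      case False
      then have n1: "1 \<le> n" by simp
      have "0 \<le> (1 / (2 * real n)) *\<^sub>R (a + u)" using a0 u0 by (simp add: scaleR_nonneg_nonneg)
      then have "x \<le> (1 / (2 * real n)) *\<^sub>R (a + u)" unfolding x_def using bound[OF n1] by simp
      then have "real n *\<^sub>R x \<le> real n *\<^sub>R ((1 / (2 * real n)) *\<^sub>R (a + u))"
        by (rule scaleR_left_mono) simp
      also have "\<dots> = (1/2) *\<^sub>R (a + u)" using n1 by simp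
      finally show ?thesis .
    qed
  qed
  then have "a \<boxtimes> u - z \<le> 0" unfolding x_def by (metis sup.cobounded1)
  then show ?thesis by simp
qed



lemma sup_neg_nonneg:
  fixes E :: "'a::lattice_ab_group_add"
  shows "0 \<le> sup E (- E)"
proof -
  have "E + - E \<le> sup E (- E) + sup E (- E)" by (intro add_mono) simp_all
  then show ?thesis by simp
qed

lemma pos_parts_le:
  fixes E :: "'a::lattice_ab_group_add"
  shows "sup E 0 + sup (- E) 0 \<le> sup E (- E)"
proof -
  have "sup E 0 + sup (- E) 0 = sup (E + sup (- E) 0) (0 + sup (- E) 0)"
    by (rule add_sup_distrib_right)
  also have "E + sup (- E) 0 = sup 0 E"
    by (simp only: add_sup_distrib_left) (simp add: sup_commute)
  finally have eq: "sup E 0 + sup (- E) 0 = sup (sup 0 E) (sup (- E) 0)" by simp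
  have "sup (sup 0 E) (sup (- E) 0) \<le> sup E (- E)"
    using sup_neg_nonneg[of E] by simp
  then show ?thesis unfolding eq .
qed

lemma inf_pair_bound:
  fixes p q x y :: "'a::lattice_ab_group_add"
  assumes xy: "x + y = p + q"
  shows "x + y - sup (p - x) (- (p - x)) \<le> inf p x + inf q y"
proof -
  define E where "E = p - x"
  have "q + p = x + y" using xy by (simp only: add.commute)
  then have q: "q = x + y - p" by (simp only: eq_diff_eq)
  have qy: "q - y = - E" unfolding q E_def by (simp add: algebra_simps)
  have 1: "inf p x = x + inf E 0"
    unfolding E_def add_inf_distrib_left by simp
  have 2: "inf q y = y + inf (- E) 0"
    unfolding qy[symmetric] add_inf_distrib_left by simp
  have 3: "inf E 0 = - sup (- E) 0" by (simp only: inf_eq_neg_sup[of E 0] minus_zero)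
  have 4: "inf (- E) 0 = - sup E 0" by (simp only: inf_eq_neg_sup[of "- E" 0] minus_zero minus_minus)
  have eq: "inf p x + inf q y = x + y - (sup E 0 + sup (- E) 0)"
    unfolding 1 2 3 4 by (simp only: diff_conv_add_uminus minus_add_distrib ac_simps)
  have "x + y - sup E (- E) \<le> x + y - (sup E 0 + sup (- E) 0)"
    by (rule diff_left_mono) (rule pos_parts_le)
  then show ?thesis unfolding eq E_def .
qed


lemma LB2:
  fixes a u p t :: "'f::vector_lattice"
  assumes gmc: "geometric_mean_closed TYPE('f)" and a0: "0 \<le> a" and u0: "0 \<le> u"
    and kp: "0 < k" and c0: "0 \<le> c" and p0: "0 \<le> p" and pa: "p \<le> k *\<^sub>R a"
    and t0: "0 \<le> t" and tu: "t \<le> inverse k *\<^sub>R u"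
  shows "inf p ((c^2) *\<^sub>R t) \<le> c *\<^sub>R (a \<boxtimes> u)"
proof (cases "c = 0")
  case True then show ?thesis using p0 by simp
next
  case False
  then have cp: "0 < c" using c0 by simp
  define z where "z = inverse c *\<^sub>R inf p ((c^2) *\<^sub>R t)"
  have ic: "0 \<le> inverse c" using cp by simp
  have z0: "0 \<le> z" unfolding z_def using p0 t0 ic
    by (intro scaleR_nonneg_nonneg) (simp_all add: scaleR_nonneg_nonneg)
  have "z \<le> inverse c *\<^sub>R p" unfolding z_def by (intro scaleR_left_mono ic) simp
  also have "\<dots> \<le> inverse c *\<^sub>R (k *\<^sub>R a)" by (intro scaleR_left_mono ic pa)
  also have "\<dots> = (k / c) *\<^sub>R a" by (simp add: divide_inverse_commute)
  finally have za: "z \<le> (k / c) *\<^sub>R a" .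
  have "z \<le> inverse c *\<^sub>R ((c^2) *\<^sub>R t)" unfolding z_def by (intro scaleR_left_mono ic) simp
  also have "\<dots> = c *\<^sub>R t" using cp by (simp add: power2_eq_square)
  also have "\<dots> \<le> c *\<^sub>R (inverse k *\<^sub>R u)" using c0 tu by (intro scaleR_left_mono)
  also have "\<dots> = inverse (k / c) *\<^sub>R u" by (simp add: divide_inverse)
  finally have zu: "z \<le> inverse (k / c) *\<^sub>R u" .
  have "z \<le> a \<boxtimes> u" using LB[OF gmc a0 u0 z0 _ za zu] kp cp by simp
  then have "c *\<^sub>R z \<le> c *\<^sub>R (a \<boxtimes> u)" using c0 by (rule scaleR_left_mono)
  moreover have "c *\<^sub>R z = inf p ((c^2) *\<^sub>R t)" unfolding z_def using cp by simp
  ultimately show ?thesis by simp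
qed


lemma mainlem_upper:
  fixes a b u :: "'f::vector_lattice"
  assumes gmc: "geometric_mean_closed TYPE('f)" and a0: "0 \<le> a" and b0: "0 \<le> b" and u0: "0 \<le> u"
  shows "cos \<phi> *\<^sub>R (a \<boxtimes> u) + sin \<phi> *\<^sub>R (b \<boxtimes> u) \<le> (a + b) \<boxtimes> u"
proof -
  define c where "c = max (cos \<phi>) 0"
  define s where "s = max (sin \<phi>) 0"
  have c0: "0 \<le> c" and s0: "0 \<le> s" unfolding c_def s_def by simp_all
  have al0: "0 \<le> a \<boxtimes> u" by (rule gm_nonneg[OF gmc a0 u0])
  have be0: "0 \<le> b \<boxtimes> u" by (rule gm_nonneg[OF gmc b0 u0])
  have c2: "c^2 \<le> (cos \<phi>)^2" unfolding c_def by (simp add: max_def power2_eq_square)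
  have s2: "s^2 \<le> (sin \<phi>)^2" unfolding s_def by (simp add: max_def power2_eq_square)
  have cs: "c^2 + s^2 \<le> 1" using c2 s2 sin_cos_squared_add[of \<phi>] by linarith
  have "cos \<phi> *\<^sub>R (a \<boxtimes> u) + sin \<phi> *\<^sub>R (b \<boxtimes> u) \<le> c *\<^sub>R (a \<boxtimes> u) + s *\<^sub>R (b \<boxtimes> u)"
    unfolding c_def s_def by (intro add_mono scaleR_right_mono al0 be0) simp_all
  also have "\<dots> \<le> (a + b) \<boxtimes> u"
  proof -
    have "2 *\<^sub>R (c *\<^sub>R (a \<boxtimes> u) + s *\<^sub>R (b \<boxtimes> u)) \<le> 2 *\<^sub>R ((a + b) \<boxtimes> u)"
    proof (rule G2[OF gmc add_nonneg_nonneg[OF a0 b0] u0])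
      fix \<theta> :: real assume th: "0 < \<theta>"
      have "2 *\<^sub>R (c *\<^sub>R (a \<boxtimes> u) + s *\<^sub>R (b \<boxtimes> u))
          = (2 * c) *\<^sub>R (a \<boxtimes> u) + (2 * s) *\<^sub>R (b \<boxtimes> u)"
        by (simp only: scaleR_add_right scaleR_scaleR)
      also have "\<dots> \<le> (\<theta> *\<^sub>R a + (c^2 / \<theta>) *\<^sub>R u) + (\<theta> *\<^sub>R b + (s^2 / \<theta>) *\<^sub>R u)"
        by (intro add_mono Lc[OF gmc a0 u0 c0 th] Lc[OF gmc b0 u0 s0 th])
      also have "\<dots> = \<theta> *\<^sub>R (a + b) + ((c^2 + s^2) / \<theta>) *\<^sub>R u"
        by (simp add: scaleR_add_right add_divide_distrib scaleR_add_left algebra_simps)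
      also have "\<dots> \<le> \<theta> *\<^sub>R (a + b) + inverse \<theta> *\<^sub>R u"
      proof -
        have "(c^2 + s^2) / \<theta> \<le> 1 / \<theta>" using cs th by (intro divide_right_mono) simp_all
        then have "((c^2 + s^2) / \<theta>) *\<^sub>R u \<le> inverse \<theta> *\<^sub>R u"
          using u0 by (simp add: scaleR_right_mono divide_inverse)
        then show ?thesis by (rule add_left_mono)
      qed
      finally show "2 *\<^sub>R (c *\<^sub>R (a \<boxtimes> u) + s *\<^sub>R (b \<boxtimes> u)) \<le> \<theta> *\<^sub>R (a + b) + inverse \<theta> *\<^sub>R u" .
    qed
    then show ?thesis
      using scaleR_left_mono[of _ _ "inverse 2"] by fastforce
  qed
  finally show ?thesis .
qed


lemma mainlem_least:
  fixes a b u w :: "'f::archimedean_vector_lattice"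
  assumes gmc: "geometric_mean_closed TYPE('f)" and a0: "0 \<le> a" and b0: "0 \<le> b" and u0: "0 \<le> u"
    and W: "\<And>\<phi>. 0 \<le> \<phi> \<Longrightarrow> \<phi> \<le> 2 * pi \<Longrightarrow> cos \<phi> *\<^sub>R (a \<boxtimes> u) + sin \<phi> *\<^sub>R (b \<boxtimes> u) \<le> w"
  shows "(a + b) \<boxtimes> u \<le> w"
proof (rule lemS[OF gmc add_nonneg_nonneg[OF a0 b0] u0])
  fix k :: real assume kp: "0 < k"
  define t where "t = inf (k *\<^sub>R (a + b)) (inverse k *\<^sub>R u)"
  define p where "p = inf t (k *\<^sub>R a)"
  define q where "q = t - p"
  have ka0: "0 \<le> k *\<^sub>R a" using kp a0 by (simp add: scaleR_nonneg_nonneg)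
  have kb0: "0 \<le> k *\<^sub>R b" using kp b0 by (simp add: scaleR_nonneg_nonneg)
  have ku0: "0 \<le> inverse k *\<^sub>R u" using kp u0 by (simp add: scaleR_nonneg_nonneg)
  have kab: "k *\<^sub>R (a + b) = k *\<^sub>R a + k *\<^sub>R b" by (rule scaleR_add_right)
  have kab0: "0 \<le> k *\<^sub>R (a + b)" unfolding kab using ka0 kb0 by (rule add_nonneg_nonneg)
  have t0: "0 \<le> t" unfolding t_def using kab0 ku0 by (rule le_infI)
  have tu: "t \<le> inverse k *\<^sub>R u" unfolding t_def by (rule inf_le2)
  have tab: "t \<le> k *\<^sub>R a + k *\<^sub>R b" unfolding t_def kab[symmetric] by (rule inf_le1)
  have p0: "0 \<le> p" unfolding p_def using t0 ka0 by (rule le_infI)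
  have pa: "p \<le> k *\<^sub>R a" unfolding p_def by (rule inf_le2)
  have pt: "p \<le> t" unfolding p_def by (rule inf_le1)
  have q0: "0 \<le> q" unfolding q_def using pt by simp
  have qb: "q \<le> k *\<^sub>R b"
  proof -
    have "q = t + sup (- t) (- (k *\<^sub>R a))" unfolding q_def p_def by (rule diff_inf_eq_sup)
    also have "\<dots> = sup (t + - t) (t + - (k *\<^sub>R a))" by (rule add_sup_distrib_left)
    also have "\<dots> = sup 0 (t - k *\<^sub>R a)" by simp
    also have "\<dots> \<le> k *\<^sub>R b"
    proof (rule le_supI)
      show "0 \<le> k *\<^sub>R b" by (rule kb0)
      show "t - k *\<^sub>R a \<le> k *\<^sub>R b" using tab by (simp add: diff_le_eq add.commute)
    qed
    finally show ?thesis .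
  qed
  have pq: "p + q = t" unfolding q_def by simp
  have al: "a \<boxtimes> u = a \<boxtimes> u" ..
  have bound: "t - w \<le> (1 / (2 * real n)) *\<^sub>R t" if n1: "1 \<le> n" for n :: nat
  proof -
    have np: "0 < real n" using n1 by simp
    define g where "g i = (real i / real n) *\<^sub>R t - p" for i :: nat
    define \<delta> where "\<delta> = (1 / (2 * real n)) *\<^sub>R t"
    have \<delta>0: "0 \<le> \<delta>" unfolding \<delta>_def using t0 np by (simp add: scaleR_nonneg_nonneg)
    have "t - w \<le> \<delta>"
    proof (rule ivt_lattice[where g = g and M = n])
      fix i assume iM: "i \<le> n"
      define r where "r = real i / real n"
      have r0: "0 \<le> r" unfolding r_def by simp
      have r1: "r \<le> 1" unfolding r_def using iM np by (simp add: divide_le_eq_1)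
      define c where "c = sqrt r"
      define s where "s = sqrt (1 - r)"
      have c0: "0 \<le> c" and s0: "0 \<le> s" unfolding c_def s_def using r0 r1 by simp_all
      have c1: "c \<le> 1" unfolding c_def using r1 by simp
      have c2: "c^2 = r" unfolding c_def using r0 by simp
      have s2: "s^2 = 1 - r" unfolding s_def using r1 by simp
      define \<phi> where "\<phi> = arccos c"
      have cm1: "- 1 \<le> c" using c0 by simp
      have ph0: "0 \<le> \<phi>" and phpi: "\<phi> \<le> pi" unfolding \<phi>_def using arccos_bounded[OF cm1 c1] by simp_all
      have ph2: "\<phi> \<le> 2 * pi" using phpi pi_gt_zero by linarith
      have cosp: "cos \<phi> = c" unfolding \<phi>_def using cm1 c1 by simp
      have sinp: "sin \<phi> = s" unfolding \<phi>_def sin_arccos[OF cm1 c1] c2 s_def ..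
      have "inf p (r *\<^sub>R t) + inf q ((1 - r) *\<^sub>R t) \<le> c *\<^sub>R (a \<boxtimes> u) + s *\<^sub>R (b \<boxtimes> u)"
        using LB2[OF gmc a0 u0 kp c0 p0 pa t0 tu] LB2[OF gmc b0 u0 kp s0 q0 qb t0 tu]
        unfolding c2 s2 by (rule add_mono)
      also have "\<dots> \<le> w" using W[OF ph0 ph2] unfolding cosp sinp .
      finally have I: "inf p (r *\<^sub>R t) + inf q ((1 - r) *\<^sub>R t) \<le> w" .
      have xy: "r *\<^sub>R t + (1 - r) *\<^sub>R t = t" by (simp add: scaleR_left_diff_distrib)
      have "r *\<^sub>R t + (1 - r) *\<^sub>R t = p + q" unfolding xy pq ..
      from inf_pair_bound[OF this] I
      have "t - sup (p - r *\<^sub>R t) (- (p - r *\<^sub>R t)) \<le> w" unfolding xy by (rule order_trans)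
      moreover have gen: "\<And>A B C::'f. A - B \<le> C \<Longrightarrow> A - C \<le> B"
        by (simp add: diff_le_eq le_diff_eq add.commute)
      ultimately have "t - w \<le> sup (p - r *\<^sub>R t) (- (p - r *\<^sub>R t))"
        by blast
      also have "sup (p - r *\<^sub>R t) (- (p - r *\<^sub>R t)) = sup (g i) (- g i)"
        unfolding g_def r_def[symmetric] by (simp add: sup_commute)
      finally show "t - w \<le> sup (g i) (- g i)" .
    next
      fix i assume "i < n"
      have e1: "real (Suc i) / real n = real i / real n + 1 / real n" by (simp add: add_divide_distrib)
      have e2: "\<delta> + \<delta> = (1 / real n) *\<^sub>R t"
      proof -
        have r: "1/(2*real n) + 1/(2*real n) = 1/real n" by simp
        show ?thesis unfolding \<delta>_def scaleR_left_distrib[symmetric] r ..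
      qed
      show "g (Suc i) \<le> g i + (\<delta> + \<delta>)"
        unfolding g_def e1 e2 by (simp add: scaleR_left_distrib algebra_simps)
    next
      have "- p \<le> 0" using p0 by simp
      have "- p \<le> \<delta>" using order_trans[OF \<open>- p \<le> 0\<close> \<delta>0] .
      then show "g 0 \<le> \<delta>" unfolding g_def by simp
    next
      have "g n = q" unfolding g_def q_def using np by simp
      moreover have "- \<delta> \<le> 0" using \<delta>0 by simp
      ultimately show "- \<delta> \<le> g n" using q0 by (metis order_trans)
    qed
    then show ?thesis unfolding \<delta>_def .
  qed
  define x where "x = sup (t - w) 0"
  have x0: "x = 0"
  proof (rule archimedean)
    show "0 \<le> x" unfolding x_def by simp
    fix n :: nat
    show "real n *\<^sub>R x \<le> (1/2) *\<^sub>R t"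
    proof (cases "n = 0")
      case True then show ?thesis using t0 by (simp add: scaleR_nonneg_nonneg)
    next
      case False
      then have n1: "1 \<le> n" by simp
      have "0 \<le> (1 / (2 * real n)) *\<^sub>R t" using t0 by (simp add: scaleR_nonneg_nonneg)
      then have "x \<le> (1 / (2 * real n)) *\<^sub>R t" unfolding x_def using bound[OF n1] by simp
      then have "real n *\<^sub>R x \<le> real n *\<^sub>R ((1 / (2 * real n)) *\<^sub>R t)"
        by (rule scaleR_left_mono) simp
      also have "\<dots> = (1/2) *\<^sub>R t" using n1 by simp
      finally show ?thesis .
    qed
  qed
  then have "t - w \<le> 0" unfolding x_def by (metis sup.cobounded1)
  then show "inf (k *\<^sub>R (a + b)) (inverse k *\<^sub>R u) \<le> w" unfolding t_def[symmetric] by simp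
qed


lemma rsq_eq:
  fixes a b u :: "'f::archimedean_vector_lattice"
  assumes gmc: "geometric_mean_closed TYPE('f)" and a0: "0 \<le> a" and b0: "0 \<le> b" and u0: "0 \<le> u"
  shows "(a \<boxtimes> u) \<boxplus> (b \<boxtimes> u) = (a + b) \<boxtimes> u"
proof -
  let ?S = "{cos \<theta> *\<^sub>R (a \<boxtimes> u) + sin \<theta> *\<^sub>R (b \<boxtimes> u) | \<theta>. 0 \<le> \<theta> \<and> \<theta> \<le> 2 * pi}"
  have sup: "is_supremum ?S ((a + b) \<boxtimes> u)"
    unfolding is_supremum_def
  proof (intro conjI allI impI ballI)
    fix s assume "s \<in> ?S"
    then obtain \<theta> where "s = cos \<theta> *\<^sub>R (a \<boxtimes> u) + sin \<theta> *\<^sub>R (b \<boxtimes> u)" by blast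
    then show "s \<le> (a + b) \<boxtimes> u" using mainlem_upper[OF gmc a0 b0 u0] by simp
  next
    fix w assume H: "\<forall>s\<in>?S. s \<le> w"
    show "(a + b) \<boxtimes> u \<le> w"
    proof (rule mainlem_least[OF gmc a0 b0 u0])
      fix \<phi> :: real assume "0 \<le> \<phi>" "\<phi> \<le> 2 * pi"
      then show "cos \<phi> *\<^sub>R (a \<boxtimes> u) + sin \<phi> *\<^sub>R (b \<boxtimes> u) \<le> w" using H by blast
    qed
  qed
  have "(THE m. is_supremum ?S m) = (a + b) \<boxtimes> u"
    using sup is_supremum_unique by blast
  then show ?thesis unfolding rsq_def .
qed

lemma gm_scale2:
  fixes c u :: "'f::vector_lattice"
  assumes gmc: "geometric_mean_closed TYPE('f)" and c0: "0 \<le> c" and u0: "0 \<le> u"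
  shows "(2 *\<^sub>R c) \<boxtimes> u = sqrt 2 *\<^sub>R (c \<boxtimes> u)"
proof (rule antisym)
  have c20: "0 \<le> 2 *\<^sub>R c" using c0 by (simp add: scaleR_nonneg_nonneg)
  have r2: "0 < sqrt (2::real)" by simp
  have rr: "sqrt (2::real) * sqrt 2 = 2" by simp
  show "sqrt 2 *\<^sub>R (c \<boxtimes> u) \<le> (2 *\<^sub>R c) \<boxtimes> u"
  proof -
    have "2 *\<^sub>R (sqrt 2 *\<^sub>R (c \<boxtimes> u)) \<le> 2 *\<^sub>R ((2 *\<^sub>R c) \<boxtimes> u)"
    proof (rule G2[OF gmc c20 u0])
      fix \<theta> :: real assume th: "0 < \<theta>"
      have th': "0 < sqrt 2 * \<theta>" using th r2 by simp
      have "sqrt 2 *\<^sub>R (2 *\<^sub>R (c \<boxtimes> u)) \<le> sqrt 2 *\<^sub>R ((sqrt 2 * \<theta>) *\<^sub>R c + inverse (sqrt 2 * \<theta>) *\<^sub>R u)"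
        by (rule scaleR_left_mono[OF G1[OF gmc c0 u0 th']]) simp
      also have "\<dots> = ((sqrt 2 * sqrt 2) * \<theta>) *\<^sub>R c + (sqrt 2 * inverse (sqrt 2 * \<theta>)) *\<^sub>R u"
        by (simp only: scaleR_add_right scaleR_scaleR mult.assoc)
      also have "sqrt 2 * inverse (sqrt 2 * \<theta>) = inverse \<theta>" using r2 th by (simp add: field_simps)
      also have "(sqrt 2 * sqrt 2) * \<theta> = \<theta> * 2" by simp
      finally have X: "sqrt 2 *\<^sub>R (2 *\<^sub>R (c \<boxtimes> u)) \<le> (\<theta> * 2) *\<^sub>R c + inverse \<theta> *\<^sub>R u" .
      have e1: "2 *\<^sub>R (sqrt 2 *\<^sub>R (c \<boxtimes> u)) = sqrt 2 *\<^sub>R (2 *\<^sub>R (c \<boxtimes> u))"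
        by (simp only: scaleR_scaleR mult.commute)
      have e2: "\<theta> *\<^sub>R (2 *\<^sub>R c) = (\<theta> * 2) *\<^sub>R c" by (simp only: scaleR_scaleR)
      show "2 *\<^sub>R (sqrt 2 *\<^sub>R (c \<boxtimes> u)) \<le> \<theta> *\<^sub>R (2 *\<^sub>R c) + inverse \<theta> *\<^sub>R u"
        unfolding e1 e2 by (rule X)
    qed
    then show ?thesis using scaleR_left_mono[of _ _ "inverse 2"] by fastforce
  qed
  show "(2 *\<^sub>R c) \<boxtimes> u \<le> sqrt 2 *\<^sub>R (c \<boxtimes> u)"
  proof -
    have "2 *\<^sub>R (inverse (sqrt 2) *\<^sub>R ((2 *\<^sub>R c) \<boxtimes> u)) \<le> 2 *\<^sub>R (c \<boxtimes> u)"
    proof (rule G2[OF gmc c0 u0])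
      fix \<theta> :: real assume th: "0 < \<theta>"
      have th': "0 < \<theta> / sqrt 2" using th r2 by simp
      have ir: "0 \<le> inverse (sqrt (2::real))" by simp
      have "inverse (sqrt 2) *\<^sub>R (2 *\<^sub>R ((2 *\<^sub>R c) \<boxtimes> u))
          \<le> inverse (sqrt 2) *\<^sub>R ((\<theta> / sqrt 2) *\<^sub>R (2 *\<^sub>R c) + inverse (\<theta> / sqrt 2) *\<^sub>R u)"
        by (rule scaleR_left_mono[OF G1[OF gmc c20 u0 th'] ir])
      also have "\<dots> = (inverse (sqrt 2) * (\<theta> / sqrt 2) * 2) *\<^sub>R c + (inverse (sqrt 2) * inverse (\<theta> / sqrt 2)) *\<^sub>R u"
        by (simp only: scaleR_add_right scaleR_scaleR mult.assoc)
      also have "inverse (sqrt 2) * (\<theta> / sqrt 2) * 2 = \<theta>" using r2 rr by (simp add: field_simps)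
      also have "inverse (sqrt 2) * inverse (\<theta> / sqrt 2) = inverse \<theta>" using r2 th by (simp add: field_simps)
      finally have X: "inverse (sqrt 2) *\<^sub>R (2 *\<^sub>R ((2 *\<^sub>R c) \<boxtimes> u)) \<le> \<theta> *\<^sub>R c + inverse \<theta> *\<^sub>R u" .
      have e1: "2 *\<^sub>R (inverse (sqrt 2) *\<^sub>R ((2 *\<^sub>R c) \<boxtimes> u)) = inverse (sqrt 2) *\<^sub>R (2 *\<^sub>R ((2 *\<^sub>R c) \<boxtimes> u))"
        by (simp only: scaleR_scaleR mult.commute)
      show "2 *\<^sub>R (inverse (sqrt 2) *\<^sub>R ((2 *\<^sub>R c) \<boxtimes> u)) \<le> \<theta> *\<^sub>R c + inverse \<theta> *\<^sub>R u"
        unfolding e1 by (rule X)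
    qed
    then have "inverse (sqrt 2) *\<^sub>R ((2 *\<^sub>R c) \<boxtimes> u) \<le> c \<boxtimes> u"
      using scaleR_left_mono[of _ _ "inverse 2"] by fastforce
    then have "sqrt 2 *\<^sub>R (inverse (sqrt 2) *\<^sub>R ((2 *\<^sub>R c) \<boxtimes> u)) \<le> sqrt 2 *\<^sub>R (c \<boxtimes> u)"
      by (rule scaleR_left_mono) simp
    then show ?thesis using r2 by simp
  qed
qed


theorem theorem3p8:
  fixes T :: "'v::real_vector \<Rightarrow> 'v \<Rightarrow> 'f::archimedean_vector_lattice"
    and u :: 'f
  assumes "geometric_mean_closed TYPE('f)"
    and "vector_semi_inner_product T"
    and "0 \<le> u"
  shows "\<forall>x y. vnorm T u (x + y) \<boxplus> vnorm T u (x - y)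
               = sqrt 2 *\<^sub>R (vnorm T u x \<boxplus> vnorm T u y)"
proof (intro allI)
  fix x y :: 'v
  have gmc: "geometric_mean_closed TYPE('f)" and u0: "0 \<le> u" using assms by simp_all
  have L1: "\<And>z. linear (\<lambda>x. T x z)" and L2: "\<And>z. linear (\<lambda>y. T z y)"
    and sym: "\<And>x y. T x y = T y x" and pos: "\<And>x. 0 \<le> T x x"
    using assms(2) unfolding vector_semi_inner_product_def by auto
  have add1: "T (v + w) z = T v z + T w z" for v w z using linear_add[OF L1[of z]] by simp
  have sub1: "T (v - w) z = T v z - T w z" for v w z using linear_diff[OF L1[of z]] by simp
  have add2: "T z (v + w) = T z v + T z w" for v w z using linear_add[OF L2[of z]] by simp
  have sub2: "T z (v - w) = T z v - T z w" for v w z using linear_diff[OF L2[of z]] by simp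
  define p where "p = T x x"
  define q where "q = T y y"
  define A where "A = T (x + y) (x + y)"
  define B where "B = T (x - y) (x - y)"
  have A0: "0 \<le> A" and B0: "0 \<le> B" and p0: "0 \<le> p" and q0: "0 \<le> q"
    unfolding A_def B_def p_def q_def by (simp_all add: pos)
  have AB: "A + B = 2 *\<^sub>R (p + q)"
  proof -
    have "A = T x x + T x y + (T y x + T y y)" unfolding A_def add1 add2 by simp
    moreover have "B = T x x - T x y - (T y x - T y y)" unfolding B_def sub1 sub2 by simp
    ultimately have "A + B = (p + q) + (p + q)" unfolding p_def q_def using sym[of x y]
      by (simp add: algebra_simps)
    then show ?thesis by (simp add: scaleR_2)
  qed
  have "vnorm T u (x + y) \<boxplus> vnorm T u (x - y) = (A \<boxtimes> u) \<boxplus> (B \<boxtimes> u)"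
    unfolding vnorm_def A_def B_def ..
  also have "\<dots> = (A + B) \<boxtimes> u" by (rule rsq_eq[OF gmc A0 B0 u0])
  also have "\<dots> = sqrt 2 *\<^sub>R ((p + q) \<boxtimes> u)" unfolding AB
    by (rule gm_scale2[OF gmc add_nonneg_nonneg[OF p0 q0] u0])
  also have "(p + q) \<boxtimes> u = (p \<boxtimes> u) \<boxplus> (q \<boxtimes> u)" by (rule rsq_eq[OF gmc p0 q0 u0, symmetric])
  also have "\<dots> = vnorm T u x \<boxplus> vnorm T u y" unfolding vnorm_def p_def q_def ..
  finally show "vnorm T u (x + y) \<boxplus> vnorm T u (x - y) = sqrt 2 *\<^sub>R (vnorm T u x \<boxplus> vnorm T u y)" .
qed

end
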